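(* Let $(M,g)$ be an $n$-dimensional pseudo-Riemannian manifold and $T$ a Killing tensor (respectively, a traceless conformal tensor). Then: (i) if $x,y$ are eigenvectors of $T$ in the eigenspace $E_\rho$ of the eigenvalue function $\rho$, then $$(T-\rho g)\{x,y\}=g(x,y)\,s+g(s,x)\,y+g(s,y)\,x,\qquad s\equiv\mathrm d\rho-t,$$ where $t=0$ (respectively, $t=\frac{2}{n+2}\nabla\cdot T$); (ii) if $x,y,z$ are eigenvectors corresponding to three different eigenvalues, then $T(x,\{y,z\})+T(z,\{x,y\})+T(y,\{z,x\})=0$.
   Context: $\nabla$ is the Levi-Civita connection; vectors and 1-forms are identified via $g$; $T$ is viewed both as a bilinear form and as an endomorphism. $\{x,y\}=\nabla_xy+\nabla_yx$. $(\nabla\cdot T)_b=\nabla^aT_{ab}$. Killing tensor: symmetric $K$ with $\nabla_{(a}K_{bc)}=0$. Conformal tensor: traceless symmetric $T$ with $\nabla_{(a}T_{bc)}=g_{(ab}t_{c)}$ for some 1-form $t$ (necessarily $t=\frac2{n+2}\nabla\cdot T$). Eigenvectors are vector fields $x$ with $T(x)=\rho x$ for the eigenvalue function $\rho$. *)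

theory Defs
  imports "HOL-Analysis.Analysis"
begin

text \<open>Local-coordinate rendering: the manifold is represented by an open chart domain
  U in real^'n (n = CARD('n)); all tensors are given by their components in the
  coordinate frame. Vectors carry upper indices, 1-forms and bilinear forms lower ones.\<close>

definition pd :: "'n::finite \<Rightarrow> (real^'n \<Rightarrow> 'b::real_normed_vector) \<Rightarrow> real^'n \<Rightarrow> 'b" where
  "pd i f p = frechet_derivative f (at p) (axis i 1)"

definition smooth_fun :: "(real^'n::finite) set \<Rightarrow> (real^'n \<Rightarrow> real) \<Rightarrow> bool" where
  "smooth_fun U f \<longleftrightarrow> (\<forall>ks::'n list. \<forall>p\<in>U. foldr pd ks f differentiable (at p))"

definition smooth_vf :: "(real^'n::finite) set \<Rightarrow> (real^'n \<Rightarrow> real^'n) \<Rightarrow> bool" where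
  "smooth_vf U X \<longleftrightarrow> (\<forall>k. smooth_fun U (\<lambda>q. X q $ k))"

definition smooth_tf :: "(real^'n::finite) set \<Rightarrow> (real^'n \<Rightarrow> real^'n^'n) \<Rightarrow> bool" where
  "smooth_tf U A \<longleftrightarrow> (\<forall>i j. smooth_fun U (\<lambda>q. A q $ i $ j))"

definition pseudo_riemannian :: "(real^'n::finite) set \<Rightarrow> (real^'n \<Rightarrow> real^'n^'n) \<Rightarrow> bool" where
  "pseudo_riemannian U g \<longleftrightarrow> open U \<and> U \<noteq> {} \<and> smooth_tf U g \<and>
     (\<forall>p\<in>U. transpose (g p) = g p \<and> det (g p) \<noteq> 0)"

definition ginv :: "(real^'n::finite \<Rightarrow> real^'n^'n) \<Rightarrow> real^'n \<Rightarrow> real^'n^'n" where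
  "ginv g p = matrix_inv (g p)"

definition chr :: "(real^'n::finite \<Rightarrow> real^'n^'n) \<Rightarrow> real^'n \<Rightarrow> 'n \<Rightarrow> 'n \<Rightarrow> 'n \<Rightarrow> real" where
  "chr g p k i j = (1/2) * (\<Sum>l\<in>UNIV. ginv g p $ k $ l *
      (pd i (\<lambda>q. g q $ j $ l) p + pd j (\<lambda>q. g q $ i $ l) p - pd l (\<lambda>q. g q $ i $ j) p))"

definition cov :: "(real^'n::finite \<Rightarrow> real^'n^'n) \<Rightarrow> (real^'n \<Rightarrow> real^'n) \<Rightarrow> (real^'n \<Rightarrow> real^'n) \<Rightarrow> real^'n \<Rightarrow> real^'n" where
  "cov g X Y p = (\<chi> k. \<Sum>i\<in>UNIV. X p $ i *
      (pd i (\<lambda>q. Y q $ k) p + (\<Sum>j\<in>UNIV. chr g p k i j * Y p $ j)))"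

definition brace :: "(real^'n::finite \<Rightarrow> real^'n^'n) \<Rightarrow> (real^'n \<Rightarrow> real^'n) \<Rightarrow> (real^'n \<Rightarrow> real^'n) \<Rightarrow> real^'n \<Rightarrow> real^'n" where
  "brace g X Y p = cov g X Y p + cov g Y X p"

definition nablaT :: "(real^'n::finite \<Rightarrow> real^'n^'n) \<Rightarrow> (real^'n \<Rightarrow> real^'n^'n) \<Rightarrow> real^'n \<Rightarrow> 'n \<Rightarrow> 'n \<Rightarrow> 'n \<Rightarrow> real" where
  "nablaT g T p k i j = pd k (\<lambda>q. T q $ i $ j) p
     - (\<Sum>l\<in>UNIV. chr g p l k i * T p $ l $ j + chr g p l k j * T p $ i $ l)"

definition sym3 :: "('n \<Rightarrow> 'n \<Rightarrow> 'n \<Rightarrow> real) \<Rightarrow> 'n \<Rightarrow> 'n \<Rightarrow> 'n \<Rightarrow> real" where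
  "sym3 A a b c = (A a b c + A a c b + A b a c + A b c a + A c a b + A c b a) / 6"

definition divT :: "(real^'n::finite \<Rightarrow> real^'n^'n) \<Rightarrow> (real^'n \<Rightarrow> real^'n^'n) \<Rightarrow> real^'n \<Rightarrow> real^'n" where
  "divT g T p = (\<chi> b. \<Sum>a\<in>UNIV. \<Sum>c\<in>UNIV. ginv g p $ a $ c * nablaT g T p c a b)"

definition symmetric_tf :: "(real^'n::finite) set \<Rightarrow> (real^'n \<Rightarrow> real^'n^'n) \<Rightarrow> bool" where
  "symmetric_tf U T \<longleftrightarrow> smooth_tf U T \<and> (\<forall>p\<in>U. transpose (T p) = T p)"

definition killing_tensor :: "(real^'n::finite) set \<Rightarrow> (real^'n \<Rightarrow> real^'n^'n) \<Rightarrow> (real^'n \<Rightarrow> real^'n^'n) \<Rightarrow> bool" where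
  "killing_tensor U g T \<longleftrightarrow> symmetric_tf U T \<and>
     (\<forall>p\<in>U. \<forall>a b c. sym3 (nablaT g T p) a b c = 0)"

definition traceless :: "(real^'n::finite) set \<Rightarrow> (real^'n \<Rightarrow> real^'n^'n) \<Rightarrow> (real^'n \<Rightarrow> real^'n^'n) \<Rightarrow> bool" where
  "traceless U g T \<longleftrightarrow> (\<forall>p\<in>U. (\<Sum>a\<in>UNIV. \<Sum>b\<in>UNIV. ginv g p $ a $ b * T p $ a $ b) = 0)"

definition conformal_tensor :: "(real^'n::finite) set \<Rightarrow> (real^'n \<Rightarrow> real^'n^'n) \<Rightarrow> (real^'n \<Rightarrow> real^'n^'n) \<Rightarrow> bool" where
  "conformal_tensor U g T \<longleftrightarrow> symmetric_tf U T \<and> traceless U g T \<and>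
     (\<exists>t::real^'n \<Rightarrow> real^'n. \<forall>p\<in>U. \<forall>a b c.
        sym3 (nablaT g T p) a b c = sym3 (\<lambda>a' b' c'. g p $ a' $ b' * t p $ c') a b c)"

definition endo :: "(real^'n::finite \<Rightarrow> real^'n^'n) \<Rightarrow> (real^'n \<Rightarrow> real^'n^'n) \<Rightarrow> real^'n \<Rightarrow> real^'n \<Rightarrow> real^'n" where
  "endo g T p v = ginv g p *v (T p *v v)"

definition eigenvector :: "(real^'n::finite) set \<Rightarrow> (real^'n \<Rightarrow> real^'n^'n) \<Rightarrow> (real^'n \<Rightarrow> real^'n^'n) \<Rightarrow> (real^'n \<Rightarrow> real) \<Rightarrow> (real^'n \<Rightarrow> real^'n) \<Rightarrow> bool" where
  "eigenvector U g T \<rho> x \<longleftrightarrow> smooth_fun U \<rho> \<and> smooth_vf U x \<and>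
     (\<forall>p\<in>U. endo g T p (x p) = \<rho> p *\<^sub>R x p)"

definition gp :: "(real^'n::finite \<Rightarrow> real^'n^'n) \<Rightarrow> real^'n \<Rightarrow> real^'n \<Rightarrow> real^'n \<Rightarrow> real" where
  "gp g p v w = v \<bullet> (g p *v w)"

definition dfun :: "(real^'n::finite \<Rightarrow> real) \<Rightarrow> real^'n \<Rightarrow> real^'n" where
  "dfun f p = (\<chi> b. pd b f p)"

end

theory Submission
  imports Defs
begin


lemma pd_cong:
  assumes "open U" "p \<in> U" "\<And>q. q \<in> U \<Longrightarrow> f q = h q"
  shows "pd i f p = pd i h p"
proof -
  have "\<And>f'. (f has_derivative f') (at p) \<longleftrightarrow> (h has_derivative f') (at p)"
  proof
    fix f' assume "(f has_derivative f') (at p)"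
    then show "(h has_derivative f') (at p)"
      by (rule has_derivative_transform_within_open[OF _ assms(1,2)]) (simp add: assms(3))
  next
    fix f' assume "(h has_derivative f') (at p)"
    then show "(f has_derivative f') (at p)"
      by (rule has_derivative_transform_within_open[OF _ assms(1,2)]) (simp add: assms(3))
  qed
  then show ?thesis unfolding pd_def frechet_derivative_def by simp
qed

lemma pd_const[simp]: "pd i (\<lambda>q. c) p = 0"
proof -
  have "(\<lambda>v. 0) = frechet_derivative (\<lambda>q. c) (at p)"
    by (rule frechet_derivative_at) (rule has_derivative_const)
  then show ?thesis unfolding pd_def by (metis)
qed

lemma pd_of_deriv: "(f has_derivative f') (at p) \<Longrightarrow> pd i f p = f' (axis i 1)"
  unfolding pd_def by (drule frechet_derivative_at) simp

lemma pd_zero_on: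
  assumes "open U" "p \<in> U" "\<And>q. q \<in> U \<Longrightarrow> f q = 0"
  shows "pd i f p = 0"
  using pd_cong[OF assms(1,2), of f "\<lambda>q. 0"] assms(3) by simp

lemma pd_add[simp]:
  assumes "f differentiable (at p)" "h differentiable (at p)"
  shows "pd i (\<lambda>q. f q + h q) p = pd i f p + pd i h p"
proof -
  have "((\<lambda>q. f q + h q) has_derivative (\<lambda>v. frechet_derivative f (at p) v + frechet_derivative h (at p) v)) (at p)"
    using assms by (intro has_derivative_add) (auto simp: frechet_derivative_works)
  from pd_of_deriv[OF this, of i] show ?thesis unfolding pd_def by simp
qed

lemma pd_diff[simp]:
  assumes "f differentiable (at p)" "h differentiable (at p)"
  shows "pd i (\<lambda>q. f q - h q) p = pd i f p - pd i h p"
proof -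
  have "((\<lambda>q. f q - h q) has_derivative (\<lambda>v. frechet_derivative f (at p) v - frechet_derivative h (at p) v)) (at p)"
    using assms by (intro has_derivative_diff) (auto simp: frechet_derivative_works)
  from pd_of_deriv[OF this, of i] show ?thesis unfolding pd_def by simp
qed

lemma pd_mult[simp]:
  fixes f h :: "real^'n::finite \<Rightarrow> real"
  assumes "f differentiable (at p)" "h differentiable (at p)"
  shows "pd i (\<lambda>q. f q * h q) p = f p * pd i h p + pd i f p * h p"
proof -
  have "((\<lambda>q. f q * h q) has_derivative (\<lambda>v. f p * frechet_derivative h (at p) v + frechet_derivative f (at p) v * h p)) (at p)"
    using assms by (intro has_derivative_mult) (auto simp: frechet_derivative_works)
  from pd_of_deriv[OF this, of i] show ?thesis unfolding pd_def by simp
qed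

lemma pd_sum[simp]:
  fixes f :: "'a \<Rightarrow> real^'n::finite \<Rightarrow> real"
  assumes "finite S" "\<And>a. a \<in> S \<Longrightarrow> f a differentiable (at p)"
  shows "pd i (\<lambda>q. \<Sum>a\<in>S. f a q) p = (\<Sum>a\<in>S. pd i (f a) p)"
proof -
  have "((\<lambda>q. \<Sum>a\<in>S. f a q) has_derivative (\<lambda>v. \<Sum>a\<in>S. frechet_derivative (f a) (at p) v)) (at p)"
    using assms by (intro has_derivative_sum) (auto simp: frechet_derivative_works)
  from pd_of_deriv[OF this, of i] show ?thesis unfolding pd_def by simp
qed

lemma differentiable_prod':
  fixes f :: "'i \<Rightarrow> real^'n::finite \<Rightarrow> real"
  assumes "\<And>a. a \<in> S \<Longrightarrow> f a differentiable (at p)"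
  shows "(\<lambda>q. \<Prod>a\<in>S. f a q) differentiable (at p)"
  using assms unfolding differentiable_def
  by (metis has_derivative_prod[of S f _ p UNIV] bchoice)

lemma smooth_diff: "smooth_fun U f \<Longrightarrow> p \<in> U \<Longrightarrow> f differentiable (at p)"
  unfolding smooth_fun_def by (metis foldr_Nil id_apply)


lemma sum3_rev: "(\<Sum>i\<in>A. \<Sum>n\<in>B. \<Sum>m\<in>C. F i n m) = (\<Sum>m\<in>C. \<Sum>n\<in>B. \<Sum>i\<in>A. F i n m)"
proof -
  have "(\<Sum>i\<in>A. \<Sum>n\<in>B. \<Sum>m\<in>C. F i n m) = (\<Sum>i\<in>A. \<Sum>m\<in>C. \<Sum>n\<in>B. F i n m)"
    by (rule sum.cong[OF refl], rule sum.swap)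
  also have "\<dots> = (\<Sum>m\<in>C. \<Sum>i\<in>A. \<Sum>n\<in>B. F i n m)" by (rule sum.swap)
  also have "\<dots> = (\<Sum>m\<in>C. \<Sum>n\<in>B. \<Sum>i\<in>A. F i n m)"
    by (rule sum.cong[OF refl], rule sum.swap)
  finally show ?thesis .
qed

definition cd :: "(real^'n::finite \<Rightarrow> real^'n^'n) \<Rightarrow> real^'n \<Rightarrow> 'n \<Rightarrow> (real^'n \<Rightarrow> real^'n) \<Rightarrow> real^'n" where
  "cd g p a u = (\<chi> l. pd a (\<lambda>q. u q $ l) p + (\<Sum>b\<in>UNIV. chr g p l a b * u p $ b))"

definition NT :: "(real^'n::finite \<Rightarrow> real^'n^'n) \<Rightarrow> (real^'n \<Rightarrow> real^'n^'n) \<Rightarrow> real^'n \<Rightarrow> 'n \<Rightarrow> real^'n \<Rightarrow> real^'n \<Rightarrow> real" where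
  "NT g A p a u v = (\<Sum>b\<in>UNIV. \<Sum>c\<in>UNIV. u $ b * v $ c * nablaT g A p a b c)"

lemma leib:
  fixes A :: "real^'n::finite \<Rightarrow> real^'n^'n" and u v :: "real^'n \<Rightarrow> real^'n"
  assumes dA: "\<And>b c. (\<lambda>q. A q $ b $ c) differentiable (at p)"
    and du: "\<And>b. (\<lambda>q. u q $ b) differentiable (at p)"
    and dv: "\<And>b. (\<lambda>q. v q $ b) differentiable (at p)"
  shows "NT g A p a (u p) (v p) = pd a (\<lambda>q. u q \<bullet> (A q *v v q)) p
     - (A p *v v p) \<bullet> cd g p a u - (u p v* A p) \<bullet> cd g p a v"
proof -
  have e1: "(\<lambda>q. u q \<bullet> (A q *v v q)) = (\<lambda>q. \<Sum>b\<in>UNIV. u q $ b * (\<Sum>c\<in>UNIV. A q $ b $ c * v q $ c))"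
    by (simp add: inner_vec_def matrix_vector_mult_def)
  have d1: "pd a (\<lambda>q. u q \<bullet> (A q *v v q)) p = (\<Sum>b\<in>UNIV. \<Sum>c\<in>UNIV.
      u p $ b * (A p $ b $ c * pd a (\<lambda>q. v q $ c) p + pd a (\<lambda>q. A q $ b $ c) p * v p $ c)
      + pd a (\<lambda>q. u q $ b) p * (A p $ b $ c * v p $ c))"
    unfolding e1 using dA du dv
    by (simp add: sum_distrib_left sum.distrib)
  show ?thesis
    unfolding d1 NT_def nablaT_def cd_def
    apply (simp add: inner_vec_def matrix_vector_mult_def vector_matrix_mult_def
        sum_distrib_left sum_distrib_right sum.distrib sum_subtractf algebra_simps)
    apply (rule arg_cong2[where f="(+)"], rule sum.swap)
    apply (subst add.commute)
    apply (rule arg_cong2[where f="(+)"]; rule sum3_rev)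
    done
qed




lemma s_id: "(\<Sum>a\<in>A. \<Sum>b\<in>B. \<Sum>c\<in>C. F a b c) = (\<Sum>a\<in>A. \<Sum>b\<in>B. \<Sum>c\<in>C. F a b c)" ..
lemma s_132: "(\<Sum>a\<in>A. \<Sum>b\<in>B. \<Sum>c\<in>C. F a b c) = (\<Sum>a\<in>A. \<Sum>c\<in>C. \<Sum>b\<in>B. F a b c)"
  by (rule sum.cong[OF refl], rule sum.swap)
lemma s_213: "(\<Sum>a\<in>A. \<Sum>b\<in>B. \<Sum>c\<in>C. F a b c) = (\<Sum>b\<in>B. \<Sum>a\<in>A. \<Sum>c\<in>C. F a b c)"
  by (rule sum.swap)
lemma s_231: "(\<Sum>a\<in>A. \<Sum>b\<in>B. \<Sum>c\<in>C. F a b c) = (\<Sum>b\<in>B. \<Sum>c\<in>C. \<Sum>a\<in>A. F a b c)"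
  by (metis s_132 s_213)
lemma s_312: "(\<Sum>a\<in>A. \<Sum>b\<in>B. \<Sum>c\<in>C. F a b c) = (\<Sum>c\<in>C. \<Sum>a\<in>A. \<Sum>b\<in>B. F a b c)"
  by (metis s_132 s_213)
lemma s_321: "(\<Sum>a\<in>A. \<Sum>b\<in>B. \<Sum>c\<in>C. F a b c) = (\<Sum>c\<in>C. \<Sum>b\<in>B. \<Sum>a\<in>A. F a b c)"
  by (metis s_132 s_213)

lemmas s_perms = s_id s_132 s_213 s_231 s_312 s_321

lemma sym3_contract:
  fixes N :: "'n::finite \<Rightarrow> 'n \<Rightarrow> 'n \<Rightarrow> real"
  assumes Ns: "\<And>k i j. N k j i = N k i j"
  shows "(\<Sum>a\<in>UNIV. \<Sum>b\<in>UNIV. \<Sum>c\<in>UNIV. x$a * y$b * w$c * sym3 N a b c)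
   = ((\<Sum>a\<in>UNIV. x$a * (\<Sum>b\<in>UNIV. \<Sum>c\<in>UNIV. w$b * y$c * N a b c))
    + (\<Sum>a\<in>UNIV. y$a * (\<Sum>b\<in>UNIV. \<Sum>c\<in>UNIV. w$b * x$c * N a b c))
    + (\<Sum>a\<in>UNIV. w$a * (\<Sum>b\<in>UNIV. \<Sum>c\<in>UNIV. x$b * y$c * N a b c))) / 3"
proof -
  let ?P1 = "(\<Sum>a\<in>UNIV. x$a * (\<Sum>b\<in>UNIV. \<Sum>c\<in>UNIV. w$b * y$c * N a b c))"
  let ?P2 = "(\<Sum>a\<in>UNIV. y$a * (\<Sum>b\<in>UNIV. \<Sum>c\<in>UNIV. w$b * x$c * N a b c))"
  let ?P3 = "(\<Sum>a\<in>UNIV. w$a * (\<Sum>b\<in>UNIV. \<Sum>c\<in>UNIV. x$b * y$c * N a b c))"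
  have e: "(\<Sum>a\<in>UNIV. \<Sum>b\<in>UNIV. \<Sum>c\<in>UNIV. x$a * y$b * w$c * sym3 N a b c)
    = ((\<Sum>a\<in>UNIV. \<Sum>b\<in>UNIV. \<Sum>c\<in>UNIV. x$a * y$b * w$c * N a b c)
     + (\<Sum>a\<in>UNIV. \<Sum>b\<in>UNIV. \<Sum>c\<in>UNIV. x$a * y$b * w$c * N a c b)
     + (\<Sum>a\<in>UNIV. \<Sum>b\<in>UNIV. \<Sum>c\<in>UNIV. x$a * y$b * w$c * N b a c)
     + (\<Sum>a\<in>UNIV. \<Sum>b\<in>UNIV. \<Sum>c\<in>UNIV. x$a * y$b * w$c * N b c a)
     + (\<Sum>a\<in>UNIV. \<Sum>b\<in>UNIV. \<Sum>c\<in>UNIV. x$a * y$b * w$c * N c a b)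
     + (\<Sum>a\<in>UNIV. \<Sum>b\<in>UNIV. \<Sum>c\<in>UNIV. x$a * y$b * w$c * N c b a)) / 6"
    unfolding sym3_def times_divide_eq_right sum_divide_distrib[symmetric]
    by (simp add: sum.distrib distrib_left)
  have t1: "(\<Sum>a\<in>UNIV. \<Sum>b\<in>UNIV. \<Sum>c\<in>UNIV. x$a * y$b * w$c * N a b c) = ?P1"
    unfolding sum_distrib_left by (rule trans[OF s_132]) (intro sum.cong refl, simp add: Ns mult_ac)
  have t2: "(\<Sum>a\<in>UNIV. \<Sum>b\<in>UNIV. \<Sum>c\<in>UNIV. x$a * y$b * w$c * N a c b) = ?P1"
    unfolding sum_distrib_left by (rule trans[OF s_132]) (intro sum.cong refl, simp add: Ns mult_ac)
  have t3: "(\<Sum>a\<in>UNIV. \<Sum>b\<in>UNIV. \<Sum>c\<in>UNIV. x$a * y$b * w$c * N b a c) = ?P2"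
    unfolding sum_distrib_left by (rule trans[OF s_231]) (intro sum.cong refl, simp add: Ns mult_ac)
  have t4: "(\<Sum>a\<in>UNIV. \<Sum>b\<in>UNIV. \<Sum>c\<in>UNIV. x$a * y$b * w$c * N b c a) = ?P2"
    unfolding sum_distrib_left by (rule trans[OF s_231]) (intro sum.cong refl, simp add: Ns mult_ac)
  have t5: "(\<Sum>a\<in>UNIV. \<Sum>b\<in>UNIV. \<Sum>c\<in>UNIV. x$a * y$b * w$c * N c a b) = ?P3"
    unfolding sum_distrib_left by (rule trans[OF s_312]) (intro sum.cong refl, simp add: Ns mult_ac)
  have t6: "(\<Sum>a\<in>UNIV. \<Sum>b\<in>UNIV. \<Sum>c\<in>UNIV. x$a * y$b * w$c * N c b a) = ?P3"
    unfolding sum_distrib_left by (rule trans[OF s_312]) (intro sum.cong refl, simp add: Ns mult_ac)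
  show ?thesis unfolding e t1 t2 t3 t4 t5 t6 by simp
qed




lemma diff_transfer:
  assumes "f differentiable (at p)" "open U" "p \<in> U" "\<And>q. q \<in> U \<Longrightarrow> f q = h q"
  shows "h differentiable (at p)"
  using assms unfolding differentiable_def
  by (metis has_derivative_transform_within_open)

lemma det_differentiable:
  fixes M :: "real^'k::finite \<Rightarrow> real^'n::finite^'n"
  assumes "\<And>i j. (\<lambda>q. M q $ i $ j) differentiable (at p)"
  shows "(\<lambda>q. det (M q)) differentiable (at p)"
  unfolding det_def
  by (intro differentiable_sum differentiable_mult differentiable_const differentiable_prod' ballI)
     (auto intro: assms simp: differentiable_prod')


lemma inv_facts:
  fixes A :: "real^'n::finite^'n"
  assumes "det A \<noteq> 0"
  shows "A ** matrix_inv A = mat 1" "matrix_inv A ** A = mat 1"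
proof -
  have "invertible A" using assms invertible_det_nz by blast
  then have "\<exists>A'. A ** A' = mat 1 \<and> A' ** A = mat 1" unfolding invertible_def .
  then have "A ** matrix_inv A = mat 1 \<and> matrix_inv A ** A = mat 1"
    unfolding matrix_inv_def by (rule someI_ex)
  then show "A ** matrix_inv A = mat 1" "matrix_inv A ** A = mat 1" by auto
qed

lemma inv_sym:
  fixes A :: "real^'n::finite^'n"
  assumes "det A \<noteq> 0" "transpose A = A"
  shows "transpose (matrix_inv A) = matrix_inv A"
proof -
  have "transpose (matrix_inv A) ** A = mat 1"
    by (metis assms(2) inv_facts(1)[OF assms(1)] matrix_transpose_mul transpose_mat)
  then have "transpose (matrix_inv A) = transpose (matrix_inv A) ** (A ** matrix_inv A)"
    using inv_facts(1)[OF assms(1)] by simp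
  also have "\<dots> = matrix_inv A"
    by (simp add: matrix_mul_assoc \<open>transpose (matrix_inv A) ** A = mat 1\<close>)
  finally show ?thesis .
qed

lemma cramer_inv:
  fixes A :: "real^'n::finite^'n"
  assumes "det A \<noteq> 0"
  shows "matrix_inv A $ a $ b = det (\<chi> i j. if j = a then (if i = b then 1 else 0) else A $ i $ j) / det A"
proof -
  let ?x = "matrix_inv A *v axis b 1"
  have "A *v ?x = axis b 1"
    by (simp add: matrix_vector_mul_assoc inv_facts(1)[OF assms])
  then have "?x = (\<chi> k. det(\<chi> i j. if j=k then axis b 1 $i else A$i$j) / det A)"
    using cramer[OF assms] by blast
  then have "?x $ a = det(\<chi> i j. if j=a then axis b 1 $i else A$i$j) / det A" by simp
  also have "(\<chi> i j. if j=a then axis b 1 $i else A$i$j) = (\<chi> i j. if j = a then (if i = b then 1 else 0) else A $ i $ j)"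
    by (simp add: vec_eq_iff axis_def)
  finally have 1: "?x $ a = det (\<chi> i j. if j = a then (if i = b then 1 else 0) else A $ i $ j) / det A" .
  have "?x $ a = matrix_inv A $ a $ b"
    by (simp add: matrix_vector_mult_def axis_def if_distrib cong: if_cong)
  with 1 show ?thesis by simp
qed

locale pt =
  fixes U :: "(real^'n::finite) set" and g :: "real^'n \<Rightarrow> real^'n^'n" and p :: "real^'n"
  assumes pr: "pseudo_riemannian U g" and pU: "p \<in> U"
begin

lemma opn: "open U" using pr unfolding pseudo_riemannian_def by auto

lemma gsymm: "q \<in> U \<Longrightarrow> transpose (g q) = g q"
  using pr unfolding pseudo_riemannian_def by auto

lemma gsym: "q \<in> U \<Longrightarrow> g q $ j $ i = g q $ i $ j"
  using gsymm[of q] by (metis transpose_def vec_lambda_beta)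

lemma gdet: "q \<in> U \<Longrightarrow> det (g q) \<noteq> 0"
  using pr unfolding pseudo_riemannian_def by auto

lemma gdiff: "(\<lambda>q. g q $ i $ j) differentiable (at p)"
  using pr pU unfolding pseudo_riemannian_def smooth_tf_def by (auto intro: smooth_diff)

lemma GH: "q \<in> U \<Longrightarrow> g q ** ginv g q = mat 1"
  unfolding ginv_def using inv_facts gdet by blast
lemma HG: "q \<in> U \<Longrightarrow> ginv g q ** g q = mat 1"
  unfolding ginv_def using inv_facts gdet by blast

lemma Hsymm: "q \<in> U \<Longrightarrow> transpose (ginv g q) = ginv g q"
  unfolding ginv_def using inv_sym gdet gsymm by blast
lemma Hsym: "q \<in> U \<Longrightarrow> ginv g q $ j $ i = ginv g q $ i $ j"
  using Hsymm[of q] by (metis transpose_def vec_lambda_beta)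

lemma Hdiff: "(\<lambda>q. ginv g q $ a $ b) differentiable (at p)"
proof -
  have d1: "(\<lambda>q. det (\<chi> i j. if j = a then (if i = b then 1 else 0) else g q $ i $ j)) differentiable (at p)"
    apply (rule det_differentiable)
    subgoal for i j by (cases "j = a"; cases "i = b") (simp_all add: gdiff)
    done
  have d2: "(\<lambda>q. det (g q)) differentiable (at p)"
    by (rule det_differentiable) (simp add: gdiff)
  have "(\<lambda>q. det (\<chi> i j. if j = a then (if i = b then 1 else 0) else g q $ i $ j) / det (g q)) differentiable (at p)"
    using d1 d2 gdet[OF pU] by simp
  then show ?thesis
    by (rule diff_transfer[OF _ opn pU]) (simp add: ginv_def cramer_inv gdet)
qed


lemma GH_sum: "q \<in> U \<Longrightarrow> (\<Sum>l\<in>UNIV. g q $ i $ l * ginv g q $ l $ j) = (if i = j then 1 else 0)"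
  using GH[of q] by (simp add: matrix_matrix_mult_def mat_def vec_eq_iff)

lemma contract_delta:
  fixes G :: "'k::finite \<Rightarrow> real" and X :: "'k \<Rightarrow> real"
  assumes "\<And>n. (\<Sum>l\<in>UNIV. G l * H l n) = (if b = n then 1 else (0::real))"
  shows "(\<Sum>l\<in>UNIV. (\<Sum>n\<in>UNIV. H l n * X n) * G l) = X b"
proof -
  have "(\<Sum>l\<in>UNIV. (\<Sum>n\<in>UNIV. H l n * X n) * G l) = (\<Sum>l\<in>UNIV. \<Sum>n\<in>UNIV. X n * (G l * H l n))"
    by (simp add: sum_distrib_right sum_distrib_left algebra_simps)
  also have "\<dots> = (\<Sum>n\<in>UNIV. \<Sum>l\<in>UNIV. X n * (G l * H l n))" by (rule sum.swap)
  also have "\<dots> = (\<Sum>n\<in>UNIV. X n * (if b = n then 1 else 0))"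
    by (simp add: sum_distrib_left[symmetric] assms)
  also have "\<dots> = X b" by (simp add: if_distrib sum.delta' cong: if_cong)
  finally show ?thesis .
qed

lemma sum_cmult_helper: "(\<Sum>l\<in>S. (c * F l) * G l) = (c::real) * (\<Sum>l\<in>S. F l * G l)"
  by (simp add: sum_distrib_left mult.assoc)

lemma GHt: "(\<Sum>l\<in>UNIV. g p $ l $ b * ginv g p $ l $ n) = (if b = n then 1 else 0)"
  by (subst gsym[OF pU]) (rule GH_sum[OF pU])

lemma chr_lower: "(\<Sum>l\<in>UNIV. chr g p l m a * g p $ l $ b)
   = (1/2) * (pd m (\<lambda>q. g q $ a $ b) p + pd a (\<lambda>q. g q $ m $ b) p - pd b (\<lambda>q. g q $ m $ a) p)"
proof -
  have "(\<Sum>l\<in>UNIV. chr g p l m a * g p $ l $ b) = (1/2) * (\<Sum>l\<in>UNIV. (\<Sum>n\<in>UNIV. ginv g p $ l $ n *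
      (pd m (\<lambda>q. g q $ a $ n) p + pd a (\<lambda>q. g q $ m $ n) p - pd n (\<lambda>q. g q $ m $ a) p)) * g p $ l $ b)"
    unfolding chr_def by (rule sum_cmult_helper)
  also have "\<dots> = (1/2) * (pd m (\<lambda>q. g q $ a $ b) p + pd a (\<lambda>q. g q $ m $ b) p - pd b (\<lambda>q. g q $ m $ a) p)"
    by (subst contract_delta[where b=b]) (auto simp: GHt)
  finally show ?thesis .
qed

lemma pd_gsym: "pd m (\<lambda>q. g q $ b $ a) p = pd m (\<lambda>q. g q $ a $ b) p"
  by (rule pd_cong[OF opn pU]) (simp add: gsym)

lemma MC: "pd m (\<lambda>q. g q $ a $ b) p = (\<Sum>l\<in>UNIV. chr g p l m a * g p $ l $ b + chr g p l m b * g p $ a $ l)"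
proof -
  have "(\<Sum>l\<in>UNIV. chr g p l m b * g p $ a $ l) = (\<Sum>l\<in>UNIV. chr g p l m b * g p $ l $ a)"
    by (simp add: gsym[OF pU])
  moreover have "pd m (\<lambda>q. g q $ b $ a) p = pd m (\<lambda>q. g q $ a $ b) p" by (rule pd_gsym)
  ultimately show ?thesis
    by (simp only: sum.distrib chr_lower) (simp add: algebra_simps)
qed

lemma nablaT_g: "nablaT g g p k i j = 0"
  unfolding nablaT_def using MC[of k i j] by (simp add: sum.distrib)

end




lemma mm_radd: "((A::real^'n::finite^'m::finite) + B) ** C = A ** C + B ** C"
  by (simp add: matrix_matrix_mult_def vec_eq_iff sum.distrib algebra_simps)
lemma mm_ladd: "(C::real^'n::finite^'m::finite) ** (A + B) = C ** A + C ** B"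
  by (rule matrix_add_ldistrib)
lemma mm_rdiff: "((A::real^'n::finite^'m::finite) - B) ** C = A ** C - B ** C"
  by (simp add: matrix_matrix_mult_def vec_eq_iff sum_subtractf algebra_simps)
lemma mm_ldiff: "(C::real^'n::finite^'m::finite) ** (A - B) = C ** A - C ** B"
  by (simp add: matrix_matrix_mult_def vec_eq_iff sum_subtractf algebra_simps)
lemma mm_lneg: "(- (A::real^'n::finite^'m::finite)) ** C = - (A ** C)"
  by (simp add: matrix_matrix_mult_def vec_eq_iff sum_negf)
lemma mm_rneg: "(C::real^'n::finite^'m::finite) ** (- A) = - (C ** A)"
  by (simp add: matrix_matrix_mult_def vec_eq_iff sum_negf)
lemma trace_neg: "trace (- (A::real^'n::finite^'n)) = - trace A"
  by (simp add: trace_def sum_negf)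

definition Dm :: "'n::finite \<Rightarrow> (real^'n \<Rightarrow> real^'n^'n) \<Rightarrow> real^'n \<Rightarrow> real^'n^'n" where
  "Dm c M p = (\<chi> i j. pd c (\<lambda>q. M q $ i $ j) p)"

lemma Dm_mult:
  fixes M N :: "real^'n::finite \<Rightarrow> real^'n^'n"
  assumes "\<And>i j. (\<lambda>q. M q $ i $ j) differentiable (at p)" "\<And>i j. (\<lambda>q. N q $ i $ j) differentiable (at p)"
  shows "Dm c (\<lambda>q. M q ** N q) p = Dm c M p ** N p + M p ** Dm c N p"
  using assms by (simp add: Dm_def vec_eq_iff matrix_matrix_mult_def sum.distrib algebra_simps)

lemma Dm_const_on:
  assumes "open U" "p \<in> U" "\<And>q. q \<in> U \<Longrightarrow> M q = K"
  shows "Dm c M p = 0"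
proof -
  have "\<And>i j. pd c (\<lambda>q. M q $ i $ j) p = pd c (\<lambda>q. K $ i $ j) p"
    by (rule pd_cong[OF assms(1,2)]) (simp add: assms(3))
  then show ?thesis by (simp add: Dm_def vec_eq_iff)
qed

lemma trace_pd:
  fixes M :: "real^'n::finite \<Rightarrow> real^'n^'n"
  assumes "\<And>i j. (\<lambda>q. M q $ i $ j) differentiable (at p)"
  shows "pd c (\<lambda>q. trace (M q)) p = trace (Dm c M p)"
  using assms by (simp add: trace_def Dm_def)

context pt
begin

definition Cm :: "'n \<Rightarrow> real^'n^'n" where "Cm c = (\<chi> l a. chr g p l c a)"

lemma MCm: "Dm c g p = transpose (Cm c) ** g p + g p ** Cm c"
  by (simp add: Dm_def Cm_def vec_eq_iff matrix_matrix_mult_def transpose_def MC sum.distrib mult.commute)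

lemma Hder: "Dm c (ginv g) p = - (ginv g p ** Dm c g p ** ginv g p)"
proof -
  have "Dm c (\<lambda>q. g q ** ginv g q) p = 0"
    by (rule Dm_const_on[OF opn pU]) (rule GH)
  then have 0: "Dm c g p ** ginv g p + g p ** Dm c (ginv g) p = 0"
    using Dm_mult[of g p "ginv g" c] gdiff Hdiff by simp
  have "Dm c (ginv g) p = ginv g p ** (g p ** Dm c (ginv g) p)"
    by (simp add: matrix_mul_assoc HG[OF pU])
  also have "g p ** Dm c (ginv g) p = - (Dm c g p ** ginv g p)"
    using 0 by (simp add: eq_neg_iff_add_eq_0 add.commute)
  finally show ?thesis by (simp add: mm_rneg matrix_mul_assoc)
qed

lemma leib_g:
  assumes du: "\<And>b. (\<lambda>q. u q $ b) differentiable (at p)"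
    and dv: "\<And>b. (\<lambda>q. v q $ b) differentiable (at p)"
  shows "pd a (\<lambda>q. u q \<bullet> (g q *v v q)) p = (g p *v v p) \<bullet> cd g p a u + (u p v* g p) \<bullet> cd g p a v"
  using leib[of g p u v g a, OF gdiff du dv] by (simp add: NT_def nablaT_g)

end


locale ptT = pt U g p for U :: "(real^'n::finite) set" and g p +
  fixes T :: "real^'n \<Rightarrow> real^'n^'n"
  assumes Tst: "symmetric_tf U T"
begin

lemma Tsymm: "q \<in> U \<Longrightarrow> transpose (T q) = T q"
  using Tst unfolding symmetric_tf_def by auto
lemma Tsym: "q \<in> U \<Longrightarrow> T q $ j $ i = T q $ i $ j"
  using Tsymm[of q] by (metis transpose_def vec_lambda_beta)
lemma Tdiff: "(\<lambda>q. T q $ i $ j) differentiable (at p)"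
  using Tst pU unfolding symmetric_tf_def smooth_tf_def by (auto intro: smooth_diff)

lemma nablaT_sym: "nablaT g T p k j i = nablaT g T p k i j"
proof -
  have "pd k (\<lambda>q. T q $ j $ i) p = pd k (\<lambda>q. T q $ i $ j) p"
    by (rule pd_cong[OF opn pU]) (simp add: Tsym)
  then show ?thesis unfolding nablaT_def by (simp add: Tsym[OF pU] add.commute)
qed

lemma trace_HT: "q \<in> U \<Longrightarrow> trace (ginv g q ** T q) = (\<Sum>a\<in>UNIV. \<Sum>b\<in>UNIV. ginv g q $ a $ b * T q $ a $ b)"
  by (simp add: trace_def matrix_matrix_mult_def Tsym)

lemma trace_free:
  assumes tl: "traceless U g T"
  shows "(\<Sum>a\<in>UNIV. \<Sum>b\<in>UNIV. ginv g p $ a $ b * nablaT g T p c a b) = 0"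
proof -
  define H where "H = ginv g p"
  define G where "G = g p"
  define T0 where "T0 = T p"
  define T' where "T' = Dm c T p"
  define G' where "G' = Dm c g p"
  define H' where "H' = Dm c (ginv g) p"
  define C where "C = Cm c"
  define M where "M = T' - transpose C ** T0 - T0 ** C"
  have HGI: "H ** G = mat 1" unfolding H_def G_def using HG[OF pU] .
  have GHI: "G ** H = mat 1" unfolding H_def G_def using GH[OF pU] .
  have nM: "nablaT g T p c a b = M $ a $ b" for a b
    by (simp add: M_def nablaT_def T'_def Dm_def C_def Cm_def T0_def matrix_matrix_mult_def
        transpose_def sum.distrib mult.commute)
  have "(\<Sum>a\<in>UNIV. \<Sum>b\<in>UNIV. H $ a $ b * M $ a $ b) = (\<Sum>a\<in>UNIV. \<Sum>b\<in>UNIV. H $ b $ a * M $ a $ b)"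
    unfolding H_def by (simp add: Hsym[OF pU])
  also have "\<dots> = (\<Sum>b\<in>UNIV. \<Sum>a\<in>UNIV. H $ b $ a * M $ a $ b)" by (rule sum.swap)
  also have "\<dots> = trace (H ** M)" by (simp add: trace_def matrix_matrix_mult_def)
  finally have 1: "(\<Sum>a\<in>UNIV. \<Sum>b\<in>UNIV. ginv g p $ a $ b * nablaT g T p c a b) = trace (H ** M)"
    by (simp add: nM H_def)
  have "pd c (\<lambda>q. trace (ginv g q ** T q)) p = 0"
    by (rule pd_zero_on[OF opn pU]) (use tl in \<open>simp add: trace_HT traceless_def\<close>)
  moreover have "pd c (\<lambda>q. trace (ginv g q ** T q)) p = trace (Dm c (\<lambda>q. ginv g q ** T q) p)"
    by (rule trace_pd) (simp add: matrix_matrix_mult_def Hdiff Tdiff)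
  moreover have "Dm c (\<lambda>q. ginv g q ** T q) p = H' ** T0 + H ** T'"
    unfolding H'_def T0_def H_def T'_def by (rule Dm_mult) (simp_all add: Hdiff Tdiff)
  ultimately have 2: "trace (H' ** T0) + trace (H ** T') = 0" by (simp add: trace_add)
  have H'e: "H' = - (H ** G' ** H)" unfolding H'_def H_def G'_def using Hder .
  have G'e: "G' = transpose C ** G + G ** C" unfolding G'_def C_def G_def using MCm .
  have "H ** G' ** H ** T0 = H ** transpose C ** (G ** H) ** T0 + (H ** G) ** C ** H ** T0"
    unfolding G'e by (simp add: mm_ladd mm_radd matrix_mul_assoc)
  also have "\<dots> = H ** transpose C ** T0 + C ** (H ** T0)"
    by (simp add: GHI HGI matrix_mul_assoc)
  finally have 3: "H' ** T0 = - (H ** transpose C ** T0) - C ** (H ** T0)"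
    unfolding H'e by (simp add: mm_lneg)
  have 4: "trace (H ** (T0 ** C)) = trace (C ** (H ** T0))"
    by (simp add: matrix_mul_assoc trace_mul_sym[of "H ** T0" C])
  have "trace (H ** M) = trace (H ** T') - trace (H ** transpose C ** T0) - trace (H ** (T0 ** C))"
    unfolding M_def by (simp add: mm_ldiff trace_sub matrix_mul_assoc)
  also have "\<dots> = 0" using 2 3 4 by (simp add: trace_sub trace_neg)
  finally show ?thesis using 1 by simp
qed

end




lemma sym3_expand3:
  "(\<Sum>a\<in>UNIV. \<Sum>b\<in>UNIV. \<Sum>c\<in>UNIV. x$a * y$b * w$c * sym3 N a b c)
    = ((\<Sum>a\<in>UNIV. \<Sum>b\<in>UNIV. \<Sum>c\<in>UNIV. x$a * y$b * w$c * N a b c)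
     + (\<Sum>a\<in>UNIV. \<Sum>b\<in>UNIV. \<Sum>c\<in>UNIV. x$a * y$b * w$c * N a c b)
     + (\<Sum>a\<in>UNIV. \<Sum>b\<in>UNIV. \<Sum>c\<in>UNIV. x$a * y$b * w$c * N b a c)
     + (\<Sum>a\<in>UNIV. \<Sum>b\<in>UNIV. \<Sum>c\<in>UNIV. x$a * y$b * w$c * N b c a)
     + (\<Sum>a\<in>UNIV. \<Sum>b\<in>UNIV. \<Sum>c\<in>UNIV. x$a * y$b * w$c * N c a b)
     + (\<Sum>a\<in>UNIV. \<Sum>b\<in>UNIV. \<Sum>c\<in>UNIV. x$a * y$b * w$c * N c b a)) / 6"
  for x y w :: "real^'n::finite"
  unfolding sym3_def times_divide_eq_right sum_divide_distrib[symmetric]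
  by (simp add: sum.distrib distrib_left)

lemma sym3_expand2:
  "(\<Sum>a\<in>UNIV. \<Sum>b\<in>UNIV. H a b * sym3 N a b c)
    = ((\<Sum>a\<in>UNIV. \<Sum>b\<in>UNIV. H a b * N a b c)
     + (\<Sum>a\<in>UNIV. \<Sum>b\<in>UNIV. H a b * N a c b)
     + (\<Sum>a\<in>UNIV. \<Sum>b\<in>UNIV. H a b * N b a c)
     + (\<Sum>a\<in>UNIV. \<Sum>b\<in>UNIV. H a b * N b c a)
     + (\<Sum>a\<in>UNIV. \<Sum>b\<in>UNIV. H a b * N c a b)
     + (\<Sum>a\<in>UNIV. \<Sum>b\<in>UNIV. H a b * N c b a)) / (6::real)"
  for H :: "'n::finite \<Rightarrow> 'n \<Rightarrow> real"
  unfolding sym3_def times_divide_eq_right sum_divide_distrib[symmetric]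
  by (simp add: sum.distrib distrib_left)

context pt begin

lemma gt_contract:
  "(\<Sum>a\<in>UNIV. \<Sum>b\<in>UNIV. \<Sum>c\<in>UNIV. x$a * y$b * w$c * sym3 (\<lambda>a b c. g p $ a $ b * t $ c) a b c)
   = ((x \<bullet> (g p *v y)) * (t \<bullet> w) + (x \<bullet> (g p *v w)) * (t \<bullet> y) + (y \<bullet> (g p *v w)) * (t \<bullet> x)) / 3"
proof -
  note gs = gsym[OF pU]
  have t1: "(\<Sum>a\<in>UNIV. \<Sum>b\<in>UNIV. \<Sum>c\<in>UNIV. x$a * y$b * w$c * (g p $ a $ b * t $ c)) = (x \<bullet> (g p *v y)) * (t \<bullet> w)"
    by (simp add: inner_vec_def matrix_vector_mult_def sum_distrib_left sum_distrib_right mult_ac)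
  have t2: "(\<Sum>a\<in>UNIV. \<Sum>b\<in>UNIV. \<Sum>c\<in>UNIV. x$a * y$b * w$c * (g p $ a $ c * t $ b)) = (x \<bullet> (g p *v w)) * (t \<bullet> y)"
    apply (simp add: inner_vec_def matrix_vector_mult_def sum_distrib_left sum_distrib_right mult_ac)
    apply (subst s_132)
    apply (intro sum.cong refl; simp add: mult_ac)
    done
  have t3: "(\<Sum>a\<in>UNIV. \<Sum>b\<in>UNIV. \<Sum>c\<in>UNIV. x$a * y$b * w$c * (g p $ b $ a * t $ c)) = (x \<bullet> (g p *v y)) * (t \<bullet> w)"
    by (simp add: inner_vec_def matrix_vector_mult_def sum_distrib_left sum_distrib_right mult_ac gs)
  have t4: "(\<Sum>a\<in>UNIV. \<Sum>b\<in>UNIV. \<Sum>c\<in>UNIV. x$a * y$b * w$c * (g p $ b $ c * t $ a)) = (y \<bullet> (g p *v w)) * (t \<bullet> x)"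
    apply (simp add: inner_vec_def matrix_vector_mult_def sum_distrib_left sum_distrib_right mult_ac)
    apply (subst s_231)
    apply (intro sum.cong refl; simp add: mult_ac)
    done
  have t5: "(\<Sum>a\<in>UNIV. \<Sum>b\<in>UNIV. \<Sum>c\<in>UNIV. x$a * y$b * w$c * (g p $ c $ a * t $ b)) = (x \<bullet> (g p *v w)) * (t \<bullet> y)"
    apply (simp add: inner_vec_def matrix_vector_mult_def sum_distrib_left sum_distrib_right mult_ac gs)
    apply (subst s_132)
    apply (intro sum.cong refl; simp add: mult_ac)
    done
  have t6: "(\<Sum>a\<in>UNIV. \<Sum>b\<in>UNIV. \<Sum>c\<in>UNIV. x$a * y$b * w$c * (g p $ c $ b * t $ a)) = (y \<bullet> (g p *v w)) * (t \<bullet> x)"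
    apply (simp add: inner_vec_def matrix_vector_mult_def sum_distrib_left sum_distrib_right mult_ac gs)
    apply (subst s_231)
    apply (intro sum.cong refl; simp add: mult_ac)
    done
  show ?thesis unfolding sym3_expand3 t1 t2 t3 t4 t5 t6 by simp
qed


lemma H_contract_N:
  fixes N :: "'n \<Rightarrow> 'n \<Rightarrow> 'n \<Rightarrow> real"
  assumes Ns: "\<And>k i j. N k j i = N k i j"
  shows "(\<Sum>a\<in>UNIV. \<Sum>b\<in>UNIV. ginv g p $ a $ b * sym3 N a b c)
    = (4 * (\<Sum>a\<in>UNIV. \<Sum>b\<in>UNIV. ginv g p $ a $ b * N a b c)
       + 2 * (\<Sum>a\<in>UNIV. \<Sum>b\<in>UNIV. ginv g p $ a $ b * N c a b)) / 6"
proof -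
  note hs = Hsym[OF pU]
  have sw: "(\<Sum>a\<in>UNIV. \<Sum>b\<in>UNIV. ginv g p $ a $ b * N b a c) = (\<Sum>a\<in>UNIV. \<Sum>b\<in>UNIV. ginv g p $ a $ b * N a b c)"
    by (subst sum.swap) (simp add: hs)
  show ?thesis
    unfolding sym3_expand2[of "\<lambda>a b. ginv g p $ a $ b"]
    by (simp add: Ns sw)
qed

lemma HG_sum: "(\<Sum>a\<in>UNIV. ginv g p $ b $ a * g p $ a $ c) = (if b = c then 1 else 0)"
  using HG[OF pU] by (simp add: matrix_matrix_mult_def mat_def vec_eq_iff)

lemma H_contract_G:
  "(\<Sum>a\<in>UNIV. \<Sum>b\<in>UNIV. ginv g p $ a $ b * sym3 (\<lambda>a b c. g p $ a $ b * t $ c) a b c)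
    = (2 * real CARD('n) + 4) * t $ c / 6"
proof -
  note hs = Hsym[OF pU] and gs = gsym[OF pU]
  have n: "(\<Sum>a\<in>UNIV. \<Sum>b\<in>UNIV. ginv g p $ a $ b * g p $ a $ b) = real CARD('n)"
  proof -
    have "(\<Sum>a\<in>UNIV. \<Sum>b\<in>UNIV. ginv g p $ a $ b * g p $ a $ b) = (\<Sum>a\<in>UNIV. \<Sum>b\<in>UNIV. ginv g p $ a $ b * g p $ b $ a)"
      by (simp add: gs)
    also have "\<dots> = (\<Sum>a\<in>(UNIV::'n set). 1)" by (simp add: HG_sum)
    finally show ?thesis by simp
  qed
  have k1: "(\<Sum>a\<in>UNIV. \<Sum>b\<in>UNIV. ginv g p $ a $ b * (g p $ a $ c * t $ b)) = t $ c"
  proof -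
    have "(\<Sum>a\<in>UNIV. \<Sum>b\<in>UNIV. ginv g p $ a $ b * (g p $ a $ c * t $ b))
        = (\<Sum>b\<in>UNIV. t $ b * (\<Sum>a\<in>UNIV. ginv g p $ b $ a * g p $ a $ c))"
      by (subst sum.swap) (simp add: sum_distrib_left hs mult_ac)
    also have "\<dots> = t $ c" by (simp add: HG_sum if_distrib sum.delta cong: if_cong)
    finally show ?thesis .
  qed
  have k2: "(\<Sum>a\<in>UNIV. \<Sum>b\<in>UNIV. ginv g p $ a $ b * (g p $ b $ c * t $ a)) = t $ c"
  proof -
    have "(\<Sum>a\<in>UNIV. \<Sum>b\<in>UNIV. ginv g p $ a $ b * (g p $ b $ c * t $ a))
        = (\<Sum>a\<in>UNIV. t $ a * (\<Sum>b\<in>UNIV. ginv g p $ a $ b * g p $ b $ c))"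
      by (simp add: sum_distrib_left mult_ac)
    also have "\<dots> = t $ c" by (simp add: HG_sum if_distrib sum.delta cong: if_cong)
    finally show ?thesis .
  qed
  have n': "(\<Sum>a\<in>UNIV. \<Sum>b\<in>UNIV. ginv g p $ a $ b * (g p $ a $ b * t $ c)) = real CARD('n) * t $ c"
  proof -
    have "(\<Sum>a\<in>UNIV. \<Sum>b\<in>UNIV. ginv g p $ a $ b * (g p $ a $ b * t $ c))
       = (\<Sum>a\<in>UNIV. \<Sum>b\<in>UNIV. ginv g p $ a $ b * g p $ a $ b) * t $ c"
      by (simp add: sum_distrib_right mult.assoc)
    then show ?thesis using n by simp
  qed
  have e3: "(\<Sum>a\<in>UNIV. \<Sum>b\<in>UNIV. ginv g p $ a $ b * (g p $ b $ a * t $ c))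
     = (\<Sum>a\<in>UNIV. \<Sum>b\<in>UNIV. ginv g p $ a $ b * (g p $ a $ b * t $ c))"
    by (simp add: gs)
  have e5: "(\<Sum>a\<in>UNIV. \<Sum>b\<in>UNIV. ginv g p $ a $ b * (g p $ c $ a * t $ b))
     = (\<Sum>a\<in>UNIV. \<Sum>b\<in>UNIV. ginv g p $ a $ b * (g p $ a $ c * t $ b))"
    by (simp add: gs)
  have e6: "(\<Sum>a\<in>UNIV. \<Sum>b\<in>UNIV. ginv g p $ a $ b * (g p $ c $ b * t $ a))
     = (\<Sum>a\<in>UNIV. \<Sum>b\<in>UNIV. ginv g p $ a $ b * (g p $ b $ c * t $ a))"
    by (simp add: gs)
  show ?thesis
    unfolding sym3_expand2[of "\<lambda>a b. ginv g p $ a $ b"] e3 e5 e6 n' k1 k2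
    by (simp add: algebra_simps)
qed

end

context ptT begin

lemma divT_eq: "divT g T p $ c = (\<Sum>a\<in>UNIV. \<Sum>b\<in>UNIV. ginv g p $ a $ b * nablaT g T p a b c)"
  unfolding divT_def by (subst sum.swap) (simp add: Hsym[OF pU])

lemma conf_t:
  assumes tl: "traceless U g T"
    and hyp: "\<And>a b c. sym3 (nablaT g T p) a b c = sym3 (\<lambda>a b c. g p $ a $ b * t $ c) a b c"
  shows "t = (2 / (real CARD('n) + 2)) *\<^sub>R divT g T p"
proof -
  have "t $ c = (2 / (real CARD('n) + 2)) * divT g T p $ c" for c
  proof -
    have "(\<Sum>a\<in>UNIV. \<Sum>b\<in>UNIV. ginv g p $ a $ b * sym3 (nablaT g T p) a b c)
        = (\<Sum>a\<in>UNIV. \<Sum>b\<in>UNIV. ginv g p $ a $ b * sym3 (\<lambda>a b c. g p $ a $ b * t $ c) a b c)"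
      by (simp add: hyp)
    then have "(4 * divT g T p $ c + 2 * 0) / 6 = (2 * real CARD('n) + 4) * t $ c / 6"
      unfolding H_contract_N[OF nablaT_sym] H_contract_G trace_free[OF tl] divT_eq .
    then show ?thesis by (simp add: field_simps)
  qed
  then show ?thesis by (simp add: vec_eq_iff)
qed

end




lemma cov_sum: "cov g x y p = (\<Sum>a\<in>UNIV. x p $ a *\<^sub>R cd g p a y)"
  by (simp add: cov_def cd_def vec_eq_iff sum_component)

lemma inner_cov: "v \<bullet> cov g x y p = (\<Sum>a\<in>UNIV. x p $ a * (v \<bullet> cd g p a y))"
  by (simp add: cov_sum inner_sum_right)

context ptT begin

lemma eig_low:
  assumes "eigenvector U g T \<rho> x" "q \<in> U"
  shows "T q *v x q = \<rho> q *\<^sub>R (g q *v x q)"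
proof -
  have "ginv g q *v (T q *v x q) = \<rho> q *\<^sub>R x q"
    using assms unfolding eigenvector_def endo_def by auto
  then have "g q *v (ginv g q *v (T q *v x q)) = g q *v (\<rho> q *\<^sub>R x q)" by simp
  then show ?thesis
    by (simp add: matrix_vector_mul_assoc matrix_mul_assoc GH[OF assms(2)] matrix_vector_mult_scaleR)
qed

lemma eig_diff:
  assumes "eigenvector U g T \<rho> x"
  shows "\<And>b. (\<lambda>q. x q $ b) differentiable (at p)" "\<rho> differentiable (at p)"
  using assms pU unfolding eigenvector_def smooth_vf_def by (auto intro: smooth_diff)

lemma vT_sym: "v v* T p = T p *v v"
  by (metis Tsymm[OF pU] transpose_matrix_vector)
lemma vG_sym: "v v* g p = g p *v v"
  by (metis gsymm[OF pU] transpose_matrix_vector)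

lemma diff_inner_mv:
  fixes A :: "real^'n \<Rightarrow> real^'n^'n"
  assumes "\<And>b. (\<lambda>q. u q $ b) differentiable (at p)" "\<And>b. (\<lambda>q. v q $ b) differentiable (at p)"
     "\<And>b c. (\<lambda>q. A q $ b $ c) differentiable (at p)"
  shows "(\<lambda>q. u q \<bullet> (A q *v v q)) differentiable (at p)"
  using assms by (simp add: inner_vec_def matrix_vector_mult_def)

lemma NT_wy:
  assumes ey: "eigenvector U g T \<rho> y"
  shows "NT g T p a w (y p) = pd a \<rho> p * (w \<bullet> (g p *v y p)) + \<rho> p * ((w v* g p) \<bullet> cd g p a y)
     - (w v* T p) \<bullet> cd g p a y"
proof -
  note dy = eig_diff[OF ey]
  have l: "NT g T p a ((\<lambda>q. w) p) (y p) = pd a (\<lambda>q. w \<bullet> (T q *v y q)) p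
     - (T p *v y p) \<bullet> cd g p a (\<lambda>q. w) - (w v* T p) \<bullet> cd g p a y"
    by (rule leib[OF Tdiff _ dy(1)]) simp
  have "pd a (\<lambda>q. w \<bullet> (T q *v y q)) p = pd a (\<lambda>q. \<rho> q * (w \<bullet> (g q *v y q))) p"
    by (rule pd_cong[OF opn pU]) (simp add: eig_low[OF ey])
  also have "\<dots> = \<rho> p * pd a (\<lambda>q. w \<bullet> (g q *v y q)) p + pd a \<rho> p * (w \<bullet> (g p *v y p))"
    by (rule pd_mult[OF dy(2) diff_inner_mv]) (simp_all add: dy gdiff)
  also have "pd a (\<lambda>q. w \<bullet> (g q *v y q)) p = (g p *v y p) \<bullet> cd g p a (\<lambda>q. w) + (w v* g p) \<bullet> cd g p a y"
    using leib_g[of "\<lambda>q. w" y a] dy by simp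
  finally show ?thesis using l eig_low[OF ey pU]
    by (simp add: algebra_simps)
qed

lemma NT_xy:
  assumes ex: "eigenvector U g T \<rho> x" and ey: "eigenvector U g T \<rho> y"
  shows "NT g T p c (x p) (y p) = pd c \<rho> p * (x p \<bullet> (g p *v y p))"
proof -
  note dy = eig_diff[OF ey] and dx = eig_diff[OF ex]
  have l: "NT g T p c (x p) (y p) = pd c (\<lambda>q. x q \<bullet> (T q *v y q)) p
     - (T p *v y p) \<bullet> cd g p c x - (x p v* T p) \<bullet> cd g p c y"
    by (rule leib[OF Tdiff dx(1) dy(1)])
  have "pd c (\<lambda>q. x q \<bullet> (T q *v y q)) p = pd c (\<lambda>q. \<rho> q * (x q \<bullet> (g q *v y q))) p"
    by (rule pd_cong[OF opn pU]) (simp add: eig_low[OF ey])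
  also have "\<dots> = \<rho> p * pd c (\<lambda>q. x q \<bullet> (g q *v y q)) p + pd c \<rho> p * (x p \<bullet> (g p *v y p))"
    by (rule pd_mult[OF dy(2) diff_inner_mv]) (simp_all add: dy dx gdiff)
  also have "pd c (\<lambda>q. x q \<bullet> (g q *v y q)) p = (g p *v y p) \<bullet> cd g p c x + (x p v* g p) \<bullet> cd g p c y"
    using leib_g[of x y c] dy dx by simp
  finally show ?thesis using l eig_low[OF ey pU] eig_low[OF ex pU]
    by (simp add: algebra_simps vT_sym vG_sym)
qed

end




context ptT begin

lemma vH_sym: "v v* ginv g p = ginv g p *v v"
  by (metis Hsymm[OF pU] transpose_matrix_vector)

lemma P_wy:
  assumes ey: "eigenvector U g T \<rho> y"
  shows "(\<Sum>a\<in>UNIV. x p $ a * NT g T p a w (y p))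
     = (dfun \<rho> p \<bullet> x p) * (w \<bullet> (g p *v y p)) + \<rho> p * (w \<bullet> (g p *v cov g x y p)) - w \<bullet> (T p *v cov g x y p)"
proof -
  have "(\<Sum>a\<in>UNIV. x p $ a * NT g T p a w (y p))
     = (\<Sum>a\<in>UNIV. x p $ a * pd a \<rho> p) * (w \<bullet> (g p *v y p)) + \<rho> p * ((w v* g p) \<bullet> cov g x y p) - (w v* T p) \<bullet> cov g x y p"
    unfolding NT_wy[OF ey] inner_cov
    by (simp add: algebra_simps sum.distrib sum_subtractf sum_distrib_left sum_distrib_right)
  moreover have "(\<Sum>a\<in>UNIV. x p $ a * pd a \<rho> p) = dfun \<rho> p \<bullet> x p"
    by (simp add: dfun_def inner_vec_def mult.commute)
  ultimately show ?thesis by (simp only: dot_lmul_matrix)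
qed

lemma P_xy:
  assumes ex: "eigenvector U g T \<rho> x" and ey: "eigenvector U g T \<rho> y"
  shows "(\<Sum>a\<in>UNIV. w $ a * NT g T p a (x p) (y p)) = (dfun \<rho> p \<bullet> w) * (x p \<bullet> (g p *v y p))"
  unfolding NT_xy[OF ex ey]
  by (simp add: dfun_def inner_vec_def sum_distrib_right mult_ac)

lemma inner_eq_vec: "(\<And>w. w \<bullet> V = w \<bullet> W) \<Longrightarrow> V = (W::real^'n)"
  by (metis inner_diff_left inner_diff_right inner_eq_zero_iff right_minus_eq)

lemma part_i:
  assumes hyp: "\<And>a b c. sym3 (nablaT g T p) a b c = sym3 (\<lambda>a b c. g p $ a $ b * t $ c) a b c"
    and ex: "eigenvector U g T \<rho> x" and ey: "eigenvector U g T \<rho> y"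
  shows "let s = ginv g p *v (dfun \<rho> p - t) in
          endo g T p (brace g x y p) - \<rho> p *\<^sub>R brace g x y p
            = gp g p (x p) (y p) *\<^sub>R s + gp g p s (x p) *\<^sub>R y p + gp g p s (y p) *\<^sub>R x p"
proof -
  define B where "B = brace g x y p"
  define G where "G = g p"
  define H where "H = ginv g p"
  define w' where "w' = dfun \<rho> p - t"
  define W where "W = (x p \<bullet> (G *v y p)) *\<^sub>R w' + (w' \<bullet> x p) *\<^sub>R (G *v y p) + (w' \<bullet> y p) *\<^sub>R (G *v x p)"
  have uGw: "u \<bullet> (G *v w) = w \<bullet> (G *v u)" for u w
    by (metis G_def dot_lmul_matrix inner_commute vG_sym)
  have VW: "T p *v B - \<rho> p *\<^sub>R (G *v B) = W"
  proof (rule inner_eq_vec)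
    fix w
    have "(\<Sum>a\<in>UNIV. \<Sum>b\<in>UNIV. \<Sum>c\<in>UNIV. x p $ a * y p $ b * w $ c * sym3 (nablaT g T p) a b c)
       = (\<Sum>a\<in>UNIV. \<Sum>b\<in>UNIV. \<Sum>c\<in>UNIV. x p $ a * y p $ b * w $ c * sym3 (\<lambda>a b c. g p $ a $ b * t $ c) a b c)"
      by (simp add: hyp)
    then have "(\<Sum>a\<in>UNIV. x p $ a * NT g T p a w (y p)) + (\<Sum>a\<in>UNIV. y p $ a * NT g T p a w (x p))
        + (\<Sum>a\<in>UNIV. w $ a * NT g T p a (x p) (y p))
        = (x p \<bullet> (g p *v y p)) * (t \<bullet> w) + (x p \<bullet> (g p *v w)) * (t \<bullet> y p) + (y p \<bullet> (g p *v w)) * (t \<bullet> x p)"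
      unfolding sym3_contract[OF nablaT_sym] gt_contract NT_def by simp
    then have "(dfun \<rho> p \<bullet> x p) * (w \<bullet> (G *v y p)) + \<rho> p * (w \<bullet> (G *v cov g x y p)) - w \<bullet> (T p *v cov g x y p)
        + ((dfun \<rho> p \<bullet> y p) * (w \<bullet> (G *v x p)) + \<rho> p * (w \<bullet> (G *v cov g y x p)) - w \<bullet> (T p *v cov g y x p))
        + (dfun \<rho> p \<bullet> w) * (x p \<bullet> (G *v y p))
        = (x p \<bullet> (G *v y p)) * (t \<bullet> w) + (w \<bullet> (G *v x p)) * (t \<bullet> y p) + (w \<bullet> (G *v y p)) * (t \<bullet> x p)"
      by (simp only: P_wy[OF ey] P_wy[OF ex] P_xy[OF ex ey] G_def[symmetric] uGw[of "x p" w] uGw[of "y p" w])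
    then show "w \<bullet> (T p *v B - \<rho> p *\<^sub>R (G *v B)) = w \<bullet> W"
      unfolding B_def brace_def W_def w'_def
      by (simp add: matrix_vector_right_distrib inner_add_right inner_diff_right inner_diff_left
          inner_commute[of t] inner_commute[of "dfun \<rho> p"] algebra_simps)
  qed
  have HGv: "H *v (G *v v) = v" for v
    by (simp add: H_def G_def matrix_vector_mul_assoc HG[OF pU])
  have "endo g T p B - \<rho> p *\<^sub>R B = H *v (T p *v B - \<rho> p *\<^sub>R (G *v B))"
    by (simp add: endo_def H_def[symmetric] matrix_vector_right_distrib matrix_vector_mult_diff_distrib
        matrix_vector_mult_scaleR HGv)
  also have "\<dots> = H *v W" using VW by simp
  also have "\<dots> = (x p \<bullet> (G *v y p)) *\<^sub>R (H *v w') + (w' \<bullet> x p) *\<^sub>R y p + (w' \<bullet> y p) *\<^sub>R x p"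
    by (simp add: W_def matrix_vector_right_distrib matrix_vector_mult_scaleR HGv)
  finally have main: "endo g T p B - \<rho> p *\<^sub>R B = (x p \<bullet> (G *v y p)) *\<^sub>R (H *v w') + (w' \<bullet> x p) *\<^sub>R y p + (w' \<bullet> y p) *\<^sub>R x p" .
  have sx: "(H *v w') \<bullet> (G *v v) = w' \<bullet> v" for v
  proof -
    have "(H *v w') \<bullet> (G *v v) = (G *v v) \<bullet> (H *v w')" by (rule inner_commute)
    also have "\<dots> = ((G *v v) v* H) \<bullet> w'" by (rule dot_lmul_matrix[symmetric])
    also have "(G *v v) v* H = v" unfolding H_def using vH_sym HGv H_def by simp
    finally show ?thesis by (simp add: inner_commute)
  qed
  show ?thesis
    unfolding Let_def gp_def main[unfolded B_def] using sx
    by (simp add: G_def H_def w'_def)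
qed


lemma sym_inner: "transpose A = A \<Longrightarrow> u \<bullet> (A *v v) = v \<bullet> (A *v (u::real^'n))"
  by (metis dot_lmul_matrix inner_commute transpose_matrix_vector)

lemma orth:
  assumes ex: "eigenvector U g T \<rho>1 x" and ey: "eigenvector U g T \<rho>2 y" and q: "q \<in> U"
    and ne: "\<rho>1 q \<noteq> \<rho>2 q"
  shows "x q \<bullet> (g q *v y q) = 0" "x q \<bullet> (T q *v y q) = 0"
proof -
  have "x q \<bullet> (T q *v y q) = \<rho>2 q * (x q \<bullet> (g q *v y q))"
    by (simp add: eig_low[OF ey q])
  moreover have "x q \<bullet> (T q *v y q) = \<rho>1 q * (x q \<bullet> (g q *v y q))"
    using sym_inner[OF Tsymm[OF q], of "x q" "y q"] sym_inner[OF gsymm[OF q], of "x q" "y q"]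
    by (simp add: eig_low[OF ex q])
  ultimately show "x q \<bullet> (g q *v y q) = 0" using ne by (metis mult_cancel_right)
  then show "x q \<bullet> (T q *v y q) = 0"
    by (simp add: eig_low[OF ey q])
qed

lemma P_orth:
  assumes eu: "eigenvector U g T \<rho>1 u" and ev: "eigenvector U g T \<rho>2 v"
    and ne: "\<And>q. q \<in> U \<Longrightarrow> \<rho>1 q \<noteq> \<rho>2 q"
  shows "(\<Sum>a\<in>UNIV. x p $ a * NT g T p a (u p) (v p))
     = - ((T p *v v p) \<bullet> cov g x u p) - (T p *v u p) \<bullet> cov g x v p"
proof -
  have "NT g T p a (u p) (v p) = pd a (\<lambda>q. u q \<bullet> (T q *v v q)) p
     - (T p *v v p) \<bullet> cd g p a u - (u p v* T p) \<bullet> cd g p a v" for a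
    by (rule leib[OF Tdiff eig_diff(1)[OF eu] eig_diff(1)[OF ev]])
  moreover have "pd a (\<lambda>q. u q \<bullet> (T q *v v q)) p = 0" for a
    by (rule pd_zero_on[OF opn pU]) (rule orth(2)[OF eu ev _ ne])
  ultimately have nt: "NT g T p a (u p) (v p) = - ((T p *v v p) \<bullet> cd g p a u) - (T p *v u p) \<bullet> cd g p a v" for a
    by (simp add: vT_sym)
  have "(\<Sum>a\<in>UNIV. x p $ a * NT g T p a (u p) (v p))
     = (\<Sum>a\<in>UNIV. - (x p $ a * ((T p *v v p) \<bullet> cd g p a u)) - x p $ a * ((T p *v u p) \<bullet> cd g p a v))"
    by (rule sum.cong[OF refl]) (simp only: nt right_diff_distrib mult_minus_right)
  then show ?thesis
    by (simp only: inner_cov sum_subtractf sum_negf)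
qed

lemma part_ii:
  assumes hyp: "\<And>a b c. sym3 (nablaT g T p) a b c = sym3 (\<lambda>a b c. g p $ a $ b * t $ c) a b c"
    and ex: "eigenvector U g T \<rho>1 x" and ey: "eigenvector U g T \<rho>2 y" and ez: "eigenvector U g T \<rho>3 z"
    and ne: "\<forall>q\<in>U. \<rho>1 q \<noteq> \<rho>2 q \<and> \<rho>2 q \<noteq> \<rho>3 q \<and> \<rho>1 q \<noteq> \<rho>3 q"
  shows "x p \<bullet> (T p *v brace g y z p) + z p \<bullet> (T p *v brace g x y p)
               + y p \<bullet> (T p *v brace g z x p) = 0"
proof -
  have "(\<Sum>a\<in>UNIV. \<Sum>b\<in>UNIV. \<Sum>c\<in>UNIV. x p $ a * y p $ b * z p $ c * sym3 (nablaT g T p) a b c)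
     = (\<Sum>a\<in>UNIV. \<Sum>b\<in>UNIV. \<Sum>c\<in>UNIV. x p $ a * y p $ b * z p $ c * sym3 (\<lambda>a b c. g p $ a $ b * t $ c) a b c)"
    by (simp add: hyp)
  then have "(\<Sum>a\<in>UNIV. x p $ a * NT g T p a (z p) (y p)) + (\<Sum>a\<in>UNIV. y p $ a * NT g T p a (z p) (x p))
        + (\<Sum>a\<in>UNIV. z p $ a * NT g T p a (x p) (y p))
        = (x p \<bullet> (g p *v y p)) * (t \<bullet> z p) + (x p \<bullet> (g p *v z p)) * (t \<bullet> y p) + (y p \<bullet> (g p *v z p)) * (t \<bullet> x p)"
    unfolding sym3_contract[OF nablaT_sym] gt_contract NT_def by simp
  moreover have "x p \<bullet> (g p *v y p) = 0" "x p \<bullet> (g p *v z p) = 0" "y p \<bullet> (g p *v z p) = 0"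
    using orth(1)[OF ex ey pU] orth(1)[OF ex ez pU] orth(1)[OF ey ez pU] ne pU by auto
  moreover have "(\<Sum>a\<in>UNIV. x p $ a * NT g T p a (z p) (y p)) = - ((T p *v y p) \<bullet> cov g x z p) - (T p *v z p) \<bullet> cov g x y p"
    by (rule P_orth[OF ez ey]) (use ne in auto)
  moreover have "(\<Sum>a\<in>UNIV. y p $ a * NT g T p a (z p) (x p)) = - ((T p *v x p) \<bullet> cov g y z p) - (T p *v z p) \<bullet> cov g y x p"
    by (rule P_orth[OF ez ex]) (use ne in auto)
  moreover have "(\<Sum>a\<in>UNIV. z p $ a * NT g T p a (x p) (y p)) = - ((T p *v y p) \<bullet> cov g z x p) - (T p *v x p) \<bullet> cov g z y p"
    by (rule P_orth[OF ex ey]) (use ne in auto)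
  moreover have "u \<bullet> (T p *v v) = (T p *v u) \<bullet> v" for u v
    by (metis dot_lmul_matrix vT_sym)
  ultimately show ?thesis
    unfolding brace_def by (simp add: inner_add_right algebra_simps)
qed

end


theorem lemma3:
  fixes U :: "(real^'n::finite) set" and g T :: "real^'n \<Rightarrow> real^'n^'n"
  assumes "pseudo_riemannian U g"
  shows "\<forall>t :: real^'n \<Rightarrow> real^'n.
    ((killing_tensor U g T \<and> t = (\<lambda>p. 0)) \<or>
     (conformal_tensor U g T \<and> t = (\<lambda>p. (2 / (real CARD('n) + 2)) *\<^sub>R divT g T p))) \<longrightarrow>
    (\<forall>\<rho> x y. eigenvector U g T \<rho> x \<and> eigenvector U g T \<rho> y \<longrightarrow>
       (\<forall>p\<in>U. let s = ginv g p *v (dfun \<rho> p - t p) in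
          endo g T p (brace g x y p) - \<rho> p *\<^sub>R brace g x y p
            = gp g p (x p) (y p) *\<^sub>R s + gp g p s (x p) *\<^sub>R y p + gp g p s (y p) *\<^sub>R x p)) \<and>
    (\<forall>\<rho>1 \<rho>2 \<rho>3 x y z. eigenvector U g T \<rho>1 x \<and> eigenvector U g T \<rho>2 y \<and> eigenvector U g T \<rho>3 z \<and>
       (\<forall>p\<in>U. \<rho>1 p \<noteq> \<rho>2 p \<and> \<rho>2 p \<noteq> \<rho>3 p \<and> \<rho>1 p \<noteq> \<rho>3 p) \<longrightarrow>
       (\<forall>p\<in>U. x p \<bullet> (T p *v brace g y z p) + z p \<bullet> (T p *v brace g x y p)
               + y p \<bullet> (T p *v brace g z x p) = 0))"
  proof (intro allI impI)
  fix t :: "real^'n \<Rightarrow> real^'n"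
  assume H: "(killing_tensor U g T \<and> t = (\<lambda>p. 0)) \<or>
     (conformal_tensor U g T \<and> t = (\<lambda>p. (2 / (real CARD('n) + 2)) *\<^sub>R divT g T p))"
  have st: "symmetric_tf U T" using H unfolding killing_tensor_def conformal_tensor_def by auto
  have hyp: "sym3 (nablaT g T p) a b c = sym3 (\<lambda>a b c. g p $ a $ b * t p $ c) a b c"
    if pU: "p \<in> U" for p a b c
  proof -
    interpret ptT U g p T using assms pU st by unfold_locales
    from H show ?thesis
    proof
      assume K: "killing_tensor U g T \<and> t = (\<lambda>p. 0)"
      then show ?thesis using pU unfolding killing_tensor_def by (simp add: sym3_def)
    next
      assume C: "conformal_tensor U g T \<and> t = (\<lambda>p. (2 / (real CARD('n) + 2)) *\<^sub>R divT g T p)"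
      then obtain t' where t': "\<forall>p\<in>U. \<forall>a b c. sym3 (nablaT g T p) a b c = sym3 (\<lambda>a' b' c'. g p $ a' $ b' * t' p $ c') a b c"
        and tl: "traceless U g T"
        unfolding conformal_tensor_def by auto
      have "t' p = (2 / (real CARD('n) + 2)) *\<^sub>R divT g T p"
        by (rule conf_t[OF tl]) (use t' pU in auto)
      then show ?thesis using t' pU C by simp
    qed
  qed
  show "(\<forall>\<rho> x y. eigenvector U g T \<rho> x \<and> eigenvector U g T \<rho> y \<longrightarrow>
       (\<forall>p\<in>U. let s = ginv g p *v (dfun \<rho> p - t p) in
          endo g T p (brace g x y p) - \<rho> p *\<^sub>R brace g x y p
            = gp g p (x p) (y p) *\<^sub>R s + gp g p s (x p) *\<^sub>R y p + gp g p s (y p) *\<^sub>R x p)) \<and>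
    (\<forall>\<rho>1 \<rho>2 \<rho>3 x y z. eigenvector U g T \<rho>1 x \<and> eigenvector U g T \<rho>2 y \<and> eigenvector U g T \<rho>3 z \<and>
       (\<forall>p\<in>U. \<rho>1 p \<noteq> \<rho>2 p \<and> \<rho>2 p \<noteq> \<rho>3 p \<and> \<rho>1 p \<noteq> \<rho>3 p) \<longrightarrow>
       (\<forall>p\<in>U. x p \<bullet> (T p *v brace g y z p) + z p \<bullet> (T p *v brace g x y p)
               + y p \<bullet> (T p *v brace g z x p) = 0))"
  proof (intro conjI allI impI ballI)
    fix \<rho> x y p
    assume e: "eigenvector U g T \<rho> x \<and> eigenvector U g T \<rho> y" and pU: "p \<in> U"
    interpret ptT U g p T using assms pU st by unfold_locales
    show "let s = ginv g p *v (dfun \<rho> p - t p) in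
          endo g T p (brace g x y p) - \<rho> p *\<^sub>R brace g x y p
            = gp g p (x p) (y p) *\<^sub>R s + gp g p s (x p) *\<^sub>R y p + gp g p s (y p) *\<^sub>R x p"
      by (rule part_i[OF hyp[OF pU]]) (use e in auto)
  next
    fix \<rho>1 \<rho>2 \<rho>3 x y z p
    assume e: "eigenvector U g T \<rho>1 x \<and> eigenvector U g T \<rho>2 y \<and> eigenvector U g T \<rho>3 z \<and>
       (\<forall>p\<in>U. \<rho>1 p \<noteq> \<rho>2 p \<and> \<rho>2 p \<noteq> \<rho>3 p \<and> \<rho>1 p \<noteq> \<rho>3 p)" and pU: "p \<in> U"
    interpret ptT U g p T using assms pU st by unfold_locales
    show "x p \<bullet> (T p *v brace g y z p) + z p \<bullet> (T p *v brace g x y p)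
               + y p \<bullet> (T p *v brace g z x p) = 0"
      by (rule part_ii[OF hyp[OF pU]]) (use e in auto)
  qed
qed

end
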